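(* Let $G$ be an infinite locally finite graph and $D$ a finite connected graph. Identify $G$ with one of its copies $G\times\{x_0\}$ ($x_0\in V(D)$) in the Cartesian product $G\square D$. Then $G$ is faithful to $G\square D$.
   Context: A ray is a one-way infinite path; two rays of a graph $H$ are equivalent in $H$ if for every finite $S\subseteq V(H)$ some component of $H-S$ contains tails of both; the classes are the ends of $H$. A subgraph $A$ of $B$ is faithful to $B$ if (i) every end of $B$ contains a ray of $A$, and (ii) any two rays of $A$ are equivalent in $A$ if and only if they are equivalent in $B$. *)

theory Defs
  imports Main
begin

record 'a graph =
  verts :: "'a set"
  adj :: "'a \<Rightarrow> 'a \<Rightarrow> bool"

definition is_graph :: "'a graph \<Rightarrow> bool" where
  "is_graph H \<longleftrightarrow>
     (\<forall>x y. adj H x y \<longrightarrow> x \<in> verts H \<and> y \<in> verts H) \<and>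
     (\<forall>x y. adj H x y \<longrightarrow> adj H y x) \<and>
     (\<forall>x. \<not> adj H x x)"

definition locally_finite :: "'a graph \<Rightarrow> bool" where
  "locally_finite H \<longleftrightarrow> (\<forall>v\<in>verts H. finite {u. adj H v u})"

text \<open>Reachability in the graph \<open>H - S\<close> (vertices of \<open>S\<close> deleted).\<close>
definition reach_minus :: "'a graph \<Rightarrow> 'a set \<Rightarrow> 'a \<Rightarrow> 'a \<Rightarrow> bool" where
  "reach_minus H S x y \<longleftrightarrow>
     x \<in> verts H - S \<and>
     (\<lambda>u v. adj H u v \<and> u \<notin> S \<and> v \<notin> S)\<^sup>*\<^sup>* x y"

definition connected_graph :: "'a graph \<Rightarrow> bool" where
  "connected_graph H \<longleftrightarrow> verts H \<noteq> {} \<and>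
     (\<forall>x\<in>verts H. \<forall>y\<in>verts H. reach_minus H {} x y)"

definition components_minus :: "'a graph \<Rightarrow> 'a set \<Rightarrow> 'a set set" where
  "components_minus H S = {{y. reach_minus H S x y} | x. x \<in> verts H - S}"

definition is_ray :: "'a graph \<Rightarrow> (nat \<Rightarrow> 'a) \<Rightarrow> bool" where
  "is_ray H r \<longleftrightarrow> inj r \<and> (\<forall>i. r i \<in> verts H) \<and> (\<forall>i. adj H (r i) (r (Suc i)))"

definition ray_equiv :: "'a graph \<Rightarrow> (nat \<Rightarrow> 'a) \<Rightarrow> (nat \<Rightarrow> 'a) \<Rightarrow> bool" where
  "ray_equiv H r s \<longleftrightarrow>
     (\<forall>S. finite S \<and> S \<subseteq> verts H \<longrightarrow>
        (\<exists>C\<in>components_minus H S. \<exists>n m. r ` {n..} \<subseteq> C \<and> s ` {m..} \<subseteq> C))"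

definition subgraph :: "'a graph \<Rightarrow> 'a graph \<Rightarrow> bool" where
  "subgraph A B \<longleftrightarrow> verts A \<subseteq> verts B \<and> (\<forall>x y. adj A x y \<longrightarrow> adj B x y)"

text \<open>Faithfulness. Ends are equivalence classes of rays; "every end of B
contains a ray of A" means every ray of B is equivalent in B to some ray of A.\<close>
definition faithful :: "'a graph \<Rightarrow> 'a graph \<Rightarrow> bool" where
  "faithful A B \<longleftrightarrow> subgraph A B \<and>
     (\<forall>r. is_ray B r \<longrightarrow> (\<exists>s. is_ray A s \<and> ray_equiv B r s)) \<and>
     (\<forall>r s. is_ray A r \<and> is_ray A s \<longrightarrow> (ray_equiv A r s \<longleftrightarrow> ray_equiv B r s))"

definition cart_prod :: "'a graph \<Rightarrow> 'b graph \<Rightarrow> ('a \<times> 'b) graph" where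
  "cart_prod G D = \<lparr> verts = verts G \<times> verts D,
     adj = (\<lambda>(g, d) (g', d'). g \<in> verts G \<and> g' \<in> verts G \<and> d \<in> verts D \<and> d' \<in> verts D \<and>
              ((g = g' \<and> adj D d d') \<or> (d = d' \<and> adj G g g'))) \<rparr>"

definition layer :: "'a graph \<Rightarrow> 'b \<Rightarrow> ('a \<times> 'b) graph" where
  "layer G x0 = \<lparr> verts = verts G \<times> {x0},
     adj = (\<lambda>(g, d) (g', d'). d = x0 \<and> d' = x0 \<and> adj G g g') \<rparr>"

end

theory Submission
  imports Defs
begin

lemma rtp_map:
  assumes "R\<^sup>*\<^sup>* x y" "\<And>a b. R a b \<Longrightarrow> Q\<^sup>*\<^sup>* (f a) (f b)"
  shows "Q\<^sup>*\<^sup>* (f x) (f y)"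
  using assms(1)
proof (induction rule: rtranclp_induct)
  case base then show ?case by simp
next
  case (step y z) then show ?case using assms(2) by (meson rtranclp_trans)
qed

lemma reach_end:
  assumes "reach_minus H S x y" shows "y \<notin> S"
proof -
  have "(\<lambda>u v. adj H u v \<and> u \<notin> S \<and> v \<notin> S)\<^sup>*\<^sup>* x y" "x \<notin> S"
    using assms unfolding reach_minus_def by auto
  then show ?thesis by (induction rule: rtranclp_induct) auto
qed

lemma walk_ray:
  fixes p :: "nat \<Rightarrow> 'a"
  assumes fin: "\<And>g. finite {j. p j = g}"
    and step: "\<And>i. p i = p (Suc i) \<or> E (p i) (p (Suc i))"
  shows "\<exists>s J. inj s \<and> (\<forall>k. E (s k) (s (Suc k))) \<and> (\<forall>k. s k = p (J k) \<and> J k \<ge> k)"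
proof -
  define last where "last g = Max {j. p j = g}" for g
  have L1: "p (last (p i)) = p i" for i
  proof -
    have "last (p i) \<in> {j. p j = p i}" unfolding last_def
      by (rule Max_in) (use fin in auto)
    then show ?thesis by simp
  qed
  have L2: "j > last (p i) \<Longrightarrow> p j \<noteq> p i" for i j
  proof
    assume "j > last (p i)" "p j = p i"
    then have "j \<le> last (p i)" unfolding last_def by (intro Max_ge) (use fin in auto)
    with \<open>j > last (p i)\<close> show False by simp
  qed
  have L3: "i \<le> last (p i)" for i unfolding last_def by (intro Max_ge) (use fin in auto)
  define J where "J = rec_nat (last (p 0)) (\<lambda>k jk. last (p (Suc jk)))"
  have J0: "J 0 = last (p 0)" and JS: "J (Suc k) = last (p (Suc (J k)))" for k
    unfolding J_def by simp_all
  have JL: "last (p (J k)) = J k" for k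
  proof -
    have "\<exists>i. J k = last (p i)" by (cases k) (auto simp: J0 JS)
    then obtain i where "J k = last (p i)" by blast
    then show ?thesis using L1 by simp
  qed
  have Jinc: "J k < J (Suc k)" for k using L3[of "Suc (J k)"] JS[of k] by simp
  have Jge: "J k \<ge> k" for k
    by (induction k) (use Jinc in \<open>auto simp: Suc_le_eq intro: le_less_trans\<close>)
  have smJ: "strict_mono J" using Jinc by (simp add: strict_mono_Suc_iff)
  define s where "s k = p (J k)" for k
  have "E (s k) (s (Suc k))" for k
  proof -
    have "p (Suc (J k)) \<noteq> p (J k)" using L2[of "J k" "Suc (J k)"] JL[of k] by simp
    moreover have "s (Suc k) = p (Suc (J k))" unfolding s_def JS using L1 by simp
    ultimately show ?thesis using step[of "J k"] unfolding s_def by auto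
  qed
  moreover have "inj s"
  proof (rule injI)
    fix k l assume eq: "s k = s l"
    show "k = l"
    proof (rule ccontr)
      assume "k \<noteq> l"
      then consider "k < l" | "l < k" by linarith
      then show False
      proof cases
        case 1
        then have "J k < J l" using smJ by (simp add: strict_mono_less)
        then show False using L2[of "J k" "J l"] JL[of k] eq unfolding s_def by simp
      next
        case 2
        then have "J l < J k" using smJ by (simp add: strict_mono_less)
        then show False using L2[of "J l" "J k"] JL[of l] eq unfolding s_def by simp
      qed
    qed
  qed
  ultimately show ?thesis using Jge unfolding s_def by blast
qed

theorem lemma17:
  fixes G :: "'a graph" and D :: "'b graph" and x0 :: 'b
  assumes "is_graph G" and "infinite (verts G)" and "locally_finite G"
    and "is_graph D" and "finite (verts D)" and "connected_graph D"
    and "x0 \<in> verts D"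
  shows "faithful (layer G x0) (cart_prod G D)"
proof -
  define A where "A = layer G x0"
  define B where "B = cart_prod G D"
  have gG: "adj G u v \<Longrightarrow> u \<in> verts G \<and> v \<in> verts G \<and> adj G v u" for u v
    using assms(1) unfolding is_graph_def by blast
  have gD: "adj D u v \<Longrightarrow> u \<in> verts D \<and> v \<in> verts D" for u v
    using assms(4) unfolding is_graph_def by blast
  have vA: "verts A = verts G \<times> {x0}" unfolding A_def layer_def by simp
  have vB: "verts B = verts G \<times> verts D" unfolding B_def cart_prod_def by simp
  have aA: "adj A (g, d) (g', d') \<longleftrightarrow> d = x0 \<and> d' = x0 \<and> adj G g g'" for g d g' d'
    unfolding A_def layer_def by simp
  have aB: "adj B (g, d) (g', d') \<longleftrightarrow> g \<in> verts G \<and> g' \<in> verts G \<and> d \<in> verts D \<and> d' \<in> verts D \<and>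
              ((g = g' \<and> adj D d d') \<or> (d = d' \<and> adj G g g'))" for g d g' d'
    unfolding B_def cart_prod_def by simp
  have aBv: "adj B u v \<Longrightarrow> u \<in> verts B \<and> v \<in> verts B" for u v
    by (cases u; cases v) (auto simp: aB vB)
  have sub: "subgraph A B"
    unfolding subgraph_def
  proof
    show "verts A \<subseteq> verts B" using vA vB assms(7) by auto
    show "\<forall>x y. adj A x y \<longrightarrow> adj B x y"
    proof (intro allI impI)
      fix x y assume "adj A x y"
      then show "adj B x y" using gG assms(7) by (cases x; cases y) (auto simp: aA aB)
    qed
  qed
  have part1: "\<exists>s. is_ray A s \<and> ray_equiv B r s" if rB: "is_ray B r" for r
  proof -
    define p where "p i = fst (r i)" for i
    have rv: "r i \<in> verts G \<times> verts D" for i using rB vB unfolding is_ray_def by auto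
    have injr: "inj r" using rB unfolding is_ray_def by blast
    have fin: "finite {j. p j = g}" for g
    proof (rule finite_subset)
      show "{j. p j = g} \<subseteq> r -` ({g} \<times> verts D)" using rv unfolding p_def by (auto simp: mem_Times_iff)
      show "finite (r -` ({g} \<times> verts D))" using injr assms(5) by (intro finite_vimageI) auto
    qed
    have stp: "p i = p (Suc i) \<or> adj G (p i) (p (Suc i))" for i
    proof -
      have "adj B (r i) (r (Suc i))" using rB unfolding is_ray_def by blast
      then show ?thesis unfolding p_def by (cases "r i"; cases "r (Suc i)") (auto simp: aB)
    qed
    obtain sG J where sG: "inj sG" "\<And>k. adj G (sG k) (sG (Suc k))" "\<And>k. sG k = p (J k)" "\<And>k. J k \<ge> k"
      using walk_ray[of p "adj G", OF fin stp] by blast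
    have sGv: "sG k \<in> verts G" for k using sG(3) rv unfolding p_def by (auto simp: mem_Times_iff)
    define s where "s k = (sG k, x0)" for k
    have "is_ray A s" unfolding is_ray_def
    proof (intro conjI allI)
      show "inj s" using sG(1) unfolding s_def inj_def by auto
      show "s i \<in> verts A" for i using sGv vA unfolding s_def by auto
      show "adj A (s i) (s (Suc i))" for i using sG(2) unfolding s_def by (simp add: aA)
    qed
    moreover have "ray_equiv B r s" unfolding ray_equiv_def
    proof (intro allI impI)
      fix S assume S: "finite S \<and> S \<subseteq> verts B"
      define T where "T = fst ` S"
      have "finite (r -` S)" using S injr by (intro finite_vimageI) auto
      then obtain N where N: "r -` S \<subseteq> {..<N}" by (auto simp: finite_nat_set_iff_bounded)
      have "finite (sG -` T)" using S sG(1) unfolding T_def by (intro finite_vimageI) auto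
      then obtain K1 where K1: "sG -` T \<subseteq> {..<K1}" by (auto simp: finite_nat_set_iff_bounded)
      define K where "K = max N K1"
      have rN: "i \<ge> N \<Longrightarrow> r i \<notin> S" for i using N by auto
      have sK: "k \<ge> K \<Longrightarrow> sG k \<notin> T" for k using K1 unfolding K_def by auto
      define R where "R = (\<lambda>u v. adj B u v \<and> u \<notin> S \<and> v \<notin> S)"
      have rNB: "r N \<in> verts B - S" using rv vB rN by auto
      define C where "C = {y. reach_minus B S (r N) y}"
      have Cc: "C \<in> components_minus B S" unfolding C_def components_minus_def using rNB by blast
      have rt: "R\<^sup>*\<^sup>* (r N) (r i)" if "i \<ge> N" for i
        using that
      proof (induction rule: dec_induct)
        case base then show ?case by simp
        case (step i)
        have "R (r i) (r (Suc i))" unfolding R_def using rB rN step.hyps unfolding is_ray_def by auto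
        then show ?case using step.IH by (meson rtranclp.rtrancl_into_rtrancl)
      qed
      have JK: "J K \<ge> N" using sG(4)[of K] unfolding K_def by linarith
      define d where "d = snd (r (J K))"
      have rJK: "r (J K) = (sG K, d)" unfolding d_def sG(3) p_def by simp
      have dD: "d \<in> verts D" using rv unfolding d_def by (auto simp: mem_Times_iff)
      have "reach_minus D {} d x0" using assms(6) dD assms(7) unfolding connected_graph_def by blast
      then have "(\<lambda>u v. adj D u v \<and> u \<notin> {} \<and> v \<notin> {})\<^sup>*\<^sup>* d x0" unfolding reach_minus_def by blast
      then have fib: "R\<^sup>*\<^sup>* ((\<lambda>e. (sG K, e)) d) ((\<lambda>e. (sG K, e)) x0)"
      proof (rule rtp_map)
        fix a b assume ab: "adj D a b \<and> a \<notin> {} \<and> b \<notin> {}"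
        have nT: "sG K \<notin> T" using sK by simp
        have "(sG K, a) \<notin> S" "(sG K, b) \<notin> S" using nT unfolding T_def by (metis fst_conv image_eqI)+
        moreover have "adj B (sG K, a) (sG K, b)" using ab gD sGv by (simp add: aB)
        ultimately show "R\<^sup>*\<^sup>* ((\<lambda>e. (sG K, e)) a) ((\<lambda>e. (sG K, e)) b)" unfolding R_def by auto
      qed
      have st: "R\<^sup>*\<^sup>* (s K) (s k)" if "k \<ge> K" for k
        using that
      proof (induction rule: dec_induct)
        case base then show ?case by simp
        case (step k)
        have "sG k \<notin> T" "sG (Suc k) \<notin> T" using sK step.hyps by auto
        then have "s k \<notin> S" "s (Suc k) \<notin> S" unfolding s_def T_def by (metis fst_conv image_eqI)+
        moreover have "adj B (s k) (s (Suc k))" using sG(2) sGv assms(7) unfolding s_def by (simp add: aB)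
        ultimately have "R (s k) (s (Suc k))" unfolding R_def by blast
        then show ?case using step.IH by (meson rtranclp.rtrancl_into_rtrancl)
      qed
      have "r ` {N..} \<subseteq> C"
      proof (rule image_subsetI)
        fix i assume "i \<in> {N..}"
        then show "r i \<in> C" using rt[of i] rNB unfolding C_def reach_minus_def R_def by simp
      qed
      moreover have "s ` {K..} \<subseteq> C"
      proof (rule image_subsetI)
        fix k assume "k \<in> {K..}"
        then have "R\<^sup>*\<^sup>* (s K) (s k)" using st by simp
        moreover have "R\<^sup>*\<^sup>* (r N) (s K)" using rt[OF JK] fib rJK unfolding s_def
          by (metis (no_types, lifting) rtranclp_trans)
        ultimately have "R\<^sup>*\<^sup>* (r N) (s k)" by (rule rtranclp_trans[rotated])
        then show "s k \<in> C" using rNB unfolding C_def reach_minus_def R_def by simp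
      qed
      ultimately show "\<exists>C\<in>components_minus B S. \<exists>n m. r ` {n..} \<subseteq> C \<and> s ` {m..} \<subseteq> C"
        using Cc by blast
    qed
    ultimately show ?thesis by blast
  qed
  have part2: "ray_equiv A r s \<longleftrightarrow> ray_equiv B r s" if rA: "is_ray A r" "is_ray A s" for r s
  proof
    assume eA: "ray_equiv A r s"
    show "ray_equiv B r s" unfolding ray_equiv_def
    proof (intro allI impI)
      fix S assume S: "finite S \<and> S \<subseteq> verts B"
      define SA where "SA = S \<inter> verts A"
      have "finite SA \<and> SA \<subseteq> verts A" using S unfolding SA_def by auto
      from eA[unfolded ray_equiv_def, rule_format, OF this]
      obtain C n m where C: "C \<in> components_minus A SA" "r ` {n..} \<subseteq> C" "s ` {m..} \<subseteq> C"
        by blast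
      then obtain x where x: "x \<in> verts A - SA" "C = {y. reach_minus A SA x y}"
        unfolding components_minus_def by blast
      have xB: "x \<in> verts B - S" using x sub unfolding SA_def subgraph_def by auto
      define C' where "C' = {y. reach_minus B S x y}"
      have "C' \<in> components_minus B S" unfolding C'_def components_minus_def using xB by blast
      moreover have "C \<subseteq> C'"
      proof
        fix y assume "y \<in> C"
        then have "(\<lambda>u v. adj A u v \<and> u \<notin> SA \<and> v \<notin> SA)\<^sup>*\<^sup>* x y"
          using x unfolding reach_minus_def by auto
        then have "(\<lambda>u v. adj B u v \<and> u \<notin> S \<and> v \<notin> S)\<^sup>*\<^sup>* x y"
        proof (rule mono_rtranclp[rule_format, rotated])
          fix a b assume ab: "adj A a b \<and> a \<notin> SA \<and> b \<notin> SA"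
          have "a \<in> verts A \<and> b \<in> verts A"
            using ab gG vA by (cases a; cases b) (auto simp: aA)
          moreover have "adj B a b" using ab sub unfolding subgraph_def by blast
          ultimately show "adj B a b \<and> a \<notin> S \<and> b \<notin> S"
            using ab unfolding SA_def by blast
        qed
        then show "y \<in> C'" unfolding C'_def reach_minus_def using xB by simp
      qed
      then have "r ` {n..} \<subseteq> C' \<and> s ` {m..} \<subseteq> C'" using C(2,3) by (meson subset_trans)
      ultimately show "\<exists>C\<in>components_minus B S. \<exists>n m. r ` {n..} \<subseteq> C \<and> s ` {m..} \<subseteq> C"
        by blast
    qed
  next
    assume eB: "ray_equiv B r s"
    show "ray_equiv A r s" unfolding ray_equiv_def
    proof (intro allI impI)
      fix SA assume SA: "finite SA \<and> SA \<subseteq> verts A"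
      define T where "T = fst ` SA"
      define S where "S = T \<times> verts D"
      have "finite S \<and> S \<subseteq> verts B" using SA assms(5) vA vB unfolding S_def T_def by auto
      from eB[unfolded ray_equiv_def, rule_format, OF this]
      obtain C n m where C: "C \<in> components_minus B S" "r ` {n..} \<subseteq> C" "s ` {m..} \<subseteq> C"
        by blast
      then obtain x where x: "x \<in> verts B - S" "C = {y. reach_minus B S x y}"
        unfolding components_minus_def by blast
      have fx: "fst x \<in> verts G" "fst x \<notin> T" using x vB unfolding S_def by auto
      have xA: "(fst x, x0) \<in> verts A - SA" 
      proof -
        have "(fst x, x0) \<notin> SA" using fx(2) unfolding T_def by (metis fst_conv image_eqI)
        then show ?thesis using fx(1) vA by simp
      qed
      define C' where "C' = {y. reach_minus A SA (fst x, x0) y}"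
      have "C' \<in> components_minus A SA" unfolding C'_def components_minus_def using xA by blast
      moreover have key: "y \<in> C'" if "y \<in> C" "y \<in> verts A" for y
      proof -
        have "(\<lambda>u v. adj B u v \<and> u \<notin> S \<and> v \<notin> S)\<^sup>*\<^sup>* x y"
          using x that unfolding reach_minus_def by auto
        then have "(\<lambda>u v. adj G u v \<and> u \<notin> T \<and> v \<notin> T)\<^sup>*\<^sup>* (fst x) (fst y)"
        proof (rule rtp_map)
          fix a b assume ab: "adj B a b \<and> a \<notin> S \<and> b \<notin> S"
          then have "a \<in> verts B \<and> b \<in> verts B" using aBv by blast
          then have "snd a \<in> verts D" "snd b \<in> verts D" using vB by (auto simp: mem_Times_iff)
          then have nT: "fst a \<notin> T" "fst b \<notin> T" using ab by (metis S_def mem_Times_iff)+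
          show "(\<lambda>u v. adj G u v \<and> u \<notin> T \<and> v \<notin> T)\<^sup>*\<^sup>* (fst a) (fst b)"
          proof (cases "fst a = fst b")
            case True then show ?thesis by simp
          next
            case False
            then have "adj G (fst a) (fst b)" using ab aB[of "fst a" "snd a" "fst b" "snd b"] by auto
            then show ?thesis using nT by auto
          qed
        qed
        then have "(\<lambda>u v. adj A u v \<and> u \<notin> SA \<and> v \<notin> SA)\<^sup>*\<^sup>* ((\<lambda>g. (g, x0)) (fst x)) ((\<lambda>g. (g, x0)) (fst y))"
        proof (rule rtp_map)
          fix a b assume ab: "adj G a b \<and> a \<notin> T \<and> b \<notin> T"
          then have "(a, x0) \<notin> SA" "(b, x0) \<notin> SA" by (metis T_def ab fst_conv image_eqI)+
          then show "(\<lambda>u v. adj A u v \<and> u \<notin> SA \<and> v \<notin> SA)\<^sup>*\<^sup>* ((\<lambda>g. (g, x0)) a) ((\<lambda>g. (g, x0)) b)"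
            using ab aA by auto
        qed
        moreover have "y = (fst y, x0)" using that(2) vA by auto
        ultimately show ?thesis unfolding C'_def reach_minus_def using xA by simp
      qed
      have "r ` {n..} \<subseteq> C'"
      proof (rule image_subsetI)
        fix i assume "i \<in> {n..}"
        then have "r i \<in> C" using C(2) by blast
        moreover have "r i \<in> verts A" using rA(1) unfolding is_ray_def by blast
        ultimately show "r i \<in> C'" by (rule key)
      qed
      moreover have "s ` {m..} \<subseteq> C'"
      proof (rule image_subsetI)
        fix i assume "i \<in> {m..}"
        then have "s i \<in> C" using C(3) by blast
        moreover have "s i \<in> verts A" using rA(2) unfolding is_ray_def by blast
        ultimately show "s i \<in> C'" by (rule key)
      qed
      ultimately show "\<exists>C\<in>components_minus A SA. \<exists>n m. r ` {n..} \<subseteq> C \<and> s ` {m..} \<subseteq> C"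
        by blast
    qed
  qed
  show ?thesis unfolding faithful_def A_def[symmetric] B_def[symmetric]
    using sub part1 part2 by blast
qed

end
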